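(* Let $d\ge2$, let $\sigma:\mathbb R\to\mathbb R$ be a non-linear (not affine) Lipschitz function applied element-wise to vectors in $\mathbb R^d$, let $\mathscr A\subseteq\mathbb R^{d\times d}$, and consider the control family $$\mathcal F=\{x\mapsto W\sigma(Ax+b) : W\in\mathbb R^{d\times d}\text{ diagonal},\ A\in\mathscr A,\ b\in\mathbb R^d\}.$$ If for every $l=1,\dots,d$ the set $\{v\in\mathbb R^d : v \text{ is the } l\text{-th row of } A \text{ for some } A\in\mathscr A\}$ equals $\mathbb R^d$, then the control system with control family $\mathcal F$ possesses the universal interpolation property.
   Context: For $g\in\mathcal F$, $\varphi^g_t$ is the time-$t$ flow of $\dot x=g(x)$; $\mathcal A_{\mathcal F}$ is the set of all finite compositions $\varphi^{f_k}_{t_k}\circ\cdots\circ\varphi^{f_1}_{t_1}$, $f_i\in\mathcal F$, $t_i\ge0$. Universal interpolation property: for every $\varepsilon>0$, every $N$ and every data $(x_i,y_i)_{i=1}^N$ in $\mathbb R^d\times\mathbb R^d$ with $x_i\ne x_j$, $y_i\ne y_j$ for $i\ne j$, there is $\varphi\in\mathcal A_{\mathcal F}$ with $\|\varphi(x_i)-y_i\|_\infty\le\varepsilon$ for all $i$. *)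

theory Defs
  imports "HOL-Analysis.Analysis"
begin

text \<open>Time-t flow of x' = g(x), started at x: the value at time t of a solution
  on [0,t] (the vector fields considered are globally Lipschitz, so the solution
  exists and is unique).\<close>
definition flow :: "(real^'d \<Rightarrow> real^'d) \<Rightarrow> real \<Rightarrow> real^'d \<Rightarrow> real^'d" where
  "flow g t x = (THE y. \<exists>u::real \<Rightarrow> real^'d. u 0 = x \<and> u t = y \<and>
      (\<forall>s\<in>{0..t}. (u has_vector_derivative g (u s)) (at s within {0..t})))"

inductive_set flow_compositions :: "(real^'d \<Rightarrow> real^'d) set \<Rightarrow> (real^'d \<Rightarrow> real^'d) set"
  for F where
  id_in: "id \<in> flow_compositions F"
| comp_in: "\<phi> \<in> flow_compositions F \<Longrightarrow> f \<in> F \<Longrightarrow> t \<ge> 0 \<Longrightarrow>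
      (flow f t \<circ> \<phi>) \<in> flow_compositions F"

definition universal_interpolation :: "(real^'d \<Rightarrow> real^'d) set \<Rightarrow> bool" where
  "universal_interpolation F \<longleftrightarrow>
    (\<forall>\<epsilon>>0. \<forall>N::nat. \<forall>x y :: nat \<Rightarrow> real^'d.
      (\<forall>i<N. \<forall>j<N. i \<noteq> j \<longrightarrow> x i \<noteq> x j \<and> y i \<noteq> y j) \<longrightarrow>
      (\<exists>\<phi>\<in>flow_compositions F. \<forall>i<N. \<forall>l. \<bar>\<phi> (x i) $ l - y i $ l\<bar> \<le> \<epsilon>))"

definition elementwise :: "(real \<Rightarrow> real) \<Rightarrow> real^'d \<Rightarrow> real^'d" where
  "elementwise \<sigma> v = (\<chi> i. \<sigma> (v $ i))"

definition is_diagonal :: "real^'d^'d \<Rightarrow> bool" where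
  "is_diagonal W \<longleftrightarrow> (\<forall>i j. i \<noteq> j \<longrightarrow> W $ i $ j = 0)"

definition control_family :: "(real \<Rightarrow> real) \<Rightarrow> (real^'d^'d) set \<Rightarrow> (real^'d \<Rightarrow> real^'d) set" where
  "control_family \<sigma> \<A> = {(\<lambda>x. W *v elementwise \<sigma> (A *v x + b)) | W A b.
       is_diagonal W \<and> A \<in> \<A>}"

end

theory Submission
  imports Defs "HOL-Computational_Algebra.Polynomial" "HOL-Computational_Algebra.Fundamental_Theorem_Algebra"
begin

lemma poly_antideriv: "\<exists>P::real poly. pderiv P = p \<and> degree P \<le> Suc (degree p)"
proof -
  define P where "P = (\<Sum>k\<le>degree p. monom (coeff p k / real (Suc k)) (Suc k))"
  have "pderiv P = (\<Sum>k\<le>degree p. pderiv (monom (coeff p k / real (Suc k)) (Suc k)))"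
    using higher_pderiv_sum[of 1] by (simp add: P_def)
  also have "\<dots> = (\<Sum>k\<le>degree p. monom (coeff p k) k)"
    by (simp add: pderiv_monom del: of_nat_Suc)
  also have "\<dots> = p" by (rule poly_as_sum_of_monoms)
  finally have 1: "pderiv P = p" .
  have "degree P \<le> Suc (degree p)" unfolding P_def
    by (rule degree_sum_le) (auto intro: order.trans[OF degree_monom_le])
  with 1 show ?thesis by blast
qed

lemma chain_poly:
  fixes g :: "nat \<Rightarrow> real \<Rightarrow> real"
  assumes "\<forall>j<K. \<forall>x. (g j has_real_derivative g (Suc j) x) (at x)" "\<forall>x. g K x = 0" "K \<ge> 1"
  shows "\<exists>p. (\<forall>x. g 0 x = poly p x) \<and> degree p < K"
  using assms
proof (induction K arbitrary: g)
  case 0 then show ?case by simp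
next
  case (Suc K)
  show ?case
  proof (cases "K = 0")
    case True
    have "\<forall>x. (g 0 has_real_derivative 0) (at x)" using Suc.prems True by auto
    then have "\<And>x. g 0 x = g 0 0" using DERIV_isconst_all by blast
    then show ?thesis by (intro exI[of _ "[:g 0 0:]"]) auto
  next
    case False
    obtain p where p: "\<forall>x. g 1 x = poly p x" "degree p < K"
      using Suc.IH[of "\<lambda>j. g (Suc j)"] Suc.prems False by auto
    obtain P where P: "pderiv P = p" "degree P \<le> Suc (degree p)" using poly_antideriv by blast
    define h where "h x = g 0 x - poly P x" for x
    have "(h has_real_derivative 0) (at x)" for x
    proof -
      have "(h has_real_derivative g 1 x - poly (pderiv P) x) (at x)"
        unfolding h_def using Suc.prems(1) by (auto intro!: derivative_eq_intros poly_DERIV)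
      then show ?thesis using p P by simp
    qed
    then have hc: "\<And>x. h x = h 0" using DERIV_isconst_all by blast
    show ?thesis
    proof (intro exI[of _ "P + [:h 0:]"] conjI allI)
      fix x show "g 0 x = poly (P + [:h 0:]) x" using hc[of x] by (simp add: h_def)
    next
      have "degree (P + [:h 0:]) \<le> max (degree P) (degree [:h 0:])" by (rule degree_add_le_max)
      then show "degree (P + [:h 0:]) < Suc K" using P p by auto
    qed
  qed
qed

lemma vandermonde_zero:
  fixes t c :: "nat \<Rightarrow> real"
  assumes inj: "inj_on t {..<n}" and M: "\<forall>k<n. (\<Sum>i<n. c i * t i ^ k) = 0" and i: "i < n"
  shows "c i = 0"
proof -
  define Q where "Q = (\<Prod>j\<in>{..<n}-{i}. [:- t j, 1:])"
  have "degree Q \<le> sum (degree \<circ> (\<lambda>j. [:- t j, 1:])) ({..<n}-{i})"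
    unfolding Q_def by (rule degree_prod_sum_le) auto
  also have "\<dots> = n - 1" using i by simp
  finally have dQ: "degree Q < n" using i by linarith
  have "(\<Sum>j<n. c j * poly Q (t j)) = (\<Sum>j<n. c j * (\<Sum>k\<le>degree Q. coeff Q k * t j ^ k))"
    by (simp add: poly_altdef)
  also have "\<dots> = (\<Sum>k\<le>degree Q. coeff Q k * (\<Sum>j<n. c j * t j ^ k))"
    by (simp add: sum_distrib_left sum_distrib_right mult_ac) (rule sum.swap)
  also have "\<dots> = 0" using M dQ by (auto intro!: sum.neutral)
  finally have S: "(\<Sum>j<n. c j * poly Q (t j)) = 0" .
  have z: "poly Q (t j) = 0" if "j < n" "j \<noteq> i" for j
    unfolding Q_def poly_prod using that by (auto intro!: prod_zero)
  have "(\<Sum>j<n. c j * poly Q (t j)) = c i * poly Q (t i)"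
    using i z by (subst sum.remove[of _ i]) (auto intro!: sum.neutral)
  moreover have "poly Q (t i) \<noteq> 0"
    unfolding Q_def poly_prod using inj i by (auto simp: inj_on_def)
  ultimately show ?thesis using S by simp
qed

definition LP :: "nat \<Rightarrow> nat \<Rightarrow> real poly" where
  "LP m r = (\<Prod>s\<in>{..<m}-{r}. smult (1 / (real r - real s)) [:- real s, 1:])"

lemma LP_at: "s < m \<Longrightarrow> r < m \<Longrightarrow> poly (LP m r) (real s) = (if s = r then 1 else 0)"
  unfolding LP_def poly_prod by (auto intro!: prod_zero prod.neutral simp: diff_divide_distrib[symmetric])

lemma LP_degree: "r < m \<Longrightarrow> degree (LP m r) < m"
proof -
  assume r: "r < m"
  have "degree (LP m r) \<le> sum (degree \<circ> (\<lambda>s. smult (1 / (real r - real s)) [:- real s, 1:])) ({..<m}-{r})"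
    unfolding LP_def by (rule degree_prod_sum_le) auto
  also have "\<dots> \<le> sum (\<lambda>_. 1) ({..<m}-{r})" by (intro sum_mono) (auto simp: degree_smult_le)
  also have "\<dots> = m - 1" using r by simp
  finally show ?thesis using r by linarith
qed

lemma lagrange:
  fixes q :: "real poly"
  assumes "degree q < m"
  shows "poly q x = (\<Sum>r<m. poly q (real r) * poly (LP m r) x)"
proof -
  define I where "I = (\<Sum>r<m. smult (poly q (real r)) (LP m r))"
  have dI: "degree I < m" unfolding I_def using assms
    by (intro degree_sum_less) (auto intro: le_less_trans[OF degree_smult_le] LP_degree)
  have "q = I"
  proof (rule poly_eqI_degree[of "real ` {..<m}"])
    fix x assume "x \<in> real ` {..<m}"
    then obtain s where s: "s < m" "x = real s" by auto
    have "poly I x = (\<Sum>r<m. poly q (real r) * (if s = r then 1 else 0))"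
      unfolding I_def poly_sum using s by (simp add: LP_at)
    also have "\<dots> = poly q x" using s by (simp add: if_distrib cong: if_cong)
    finally show "poly q x = poly I x" by simp
  qed (use assms dI in \<open>auto simp: card_image inj_on_def\<close>)
  then have "poly q x = poly I x" by simp
  then show ?thesis by (simp only: I_def poly_sum poly_smult)
qed

lemma antider_exists:
  fixes f :: "real \<Rightarrow> real"
  assumes "continuous_on UNIV f"
  shows "\<exists>F. \<forall>x. (F has_real_derivative f x) (at x)"
proof -
  have "\<exists>F. \<forall>x :: real. -\<infinity> < x \<longrightarrow> x < \<infinity> \<longrightarrow> (F has_vector_derivative f x) (at x)"
    by (rule einterval_antiderivative) (use assms in \<open>auto simp: continuous_on_eq_continuous_at\<close>)
  then show ?thesis by (auto simp: has_real_derivative_iff_has_vector_derivative)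
qed

lemma antider_chain:
  fixes \<sigma> :: "real \<Rightarrow> real"
  assumes "continuous_on UNIV \<sigma>"
  shows "\<exists>A. A 0 = \<sigma> \<and> (\<forall>k x. (A (Suc k) has_real_derivative A k x) (at x))"
proof -
  define A where "A = rec_nat \<sigma> (\<lambda>k g. SOME F. \<forall>x. (F has_real_derivative g x) (at x))"
  have A0: "A 0 = \<sigma>" by (simp add: A_def)
  have AS: "A (Suc k) = (SOME F. \<forall>x. (F has_real_derivative A k x) (at x))" for k
    by (simp add: A_def)
  have *: "continuous_on UNIV (A k) \<and> (\<forall>x. (A (Suc k) has_real_derivative A k x) (at x))" for k
  proof (induction k)
    case 0
    have c: "continuous_on UNIV (A 0)" using assms A0 by simp
    have "\<forall>x. (A (Suc 0) has_real_derivative A 0 x) (at x)"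
      unfolding AS by (rule someI_ex[OF antider_exists[OF c]])
    with c show ?case by blast
  next
    case (Suc k)
    have c: "continuous_on UNIV (A (Suc k))"
      using Suc.IH by (meson DERIV_isCont continuous_at_imp_continuous_on)
    have "\<forall>x. (A (Suc (Suc k)) has_real_derivative A (Suc k) x) (at x)"
      unfolding AS[of "Suc k"] by (rule someI_ex[OF antider_exists[OF c]])
    with c show ?case by blast
  qed
  show ?thesis using A0 * by blast
qed

lemma deriv_lip_bound:
  fixes f :: "real \<Rightarrow> real"
  assumes "(f has_real_derivative D) (at x)" "\<forall>y. \<bar>f y - f x\<bar> \<le> L * \<bar>y - x\<bar>"
  shows "\<bar>D\<bar> \<le> L"
proof -
  have "((\<lambda>h. (f (x + h) - f x) / h) \<longlongrightarrow> D) (at 0)" using assms(1) by (simp add: DERIV_def)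
  then have t: "((\<lambda>h. \<bar>(f (x + h) - f x) / h\<bar>) \<longlongrightarrow> \<bar>D\<bar>) (at 0)" by (rule tendsto_rabs)
  have ev: "eventually (\<lambda>h. \<bar>(f (x + h) - f x) / h\<bar> \<le> L) (at (0::real))"
    unfolding eventually_at_filter
  proof (intro always_eventually allI impI)
    fix h :: real assume "h \<noteq> 0" "h \<in> UNIV"
    have "\<bar>f (x + h) - f x\<bar> \<le> L * \<bar>h\<bar>" using assms(2)[rule_format, of "x + h"] by simp
    then show "\<bar>(f (x + h) - f x) / h\<bar> \<le> L" using \<open>h \<noteq> 0\<close> by (simp add: abs_divide divide_le_eq)
  qed
  show ?thesis by (rule tendsto_le[OF _ tendsto_const t ev]) simp
qed

lemma lip_poly_deg:
  fixes p :: "real poly"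
  assumes "\<forall>x y. \<bar>poly p x - poly p y\<bar> \<le> L * \<bar>x - y\<bar>"
  shows "degree p \<le> 1"
proof (rule ccontr)
  assume "\<not> degree p \<le> 1"
  then have d: "degree (pderiv p) \<ge> 1" by (simp add: degree_pderiv)
  obtain a q where pq: "pderiv p = pCons a q" by (cases "pderiv p") auto
  have "q \<noteq> 0" using d pq by auto
  from poly_infinity[OF this, of "L + 1" a] obtain r where r: "\<forall>z. r \<le> norm z \<longrightarrow> L + 1 \<le> norm (poly (pCons a q) z)" by blast
  have "L + 1 \<le> \<bar>poly (pderiv p) \<bar>r\<bar>\<bar>" using r[rule_format, of "\<bar>r\<bar>"] pq by simp
  moreover have "\<bar>poly (pderiv p) \<bar>r\<bar>\<bar> \<le> L"
    by (rule deriv_lip_bound[OF poly_DERIV]) (use assms in auto)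
  ultimately show False by simp
qed

lemma deg1_affine:
  fixes p :: "real poly"
  assumes "degree p \<le> 1"
  shows "poly p x = coeff p 1 * x + coeff p 0"
proof -
  have "p = [:coeff p 0, coeff p 1:]"
    by (rule poly_eqI) (use assms in \<open>auto simp: coeff_pCons coeff_eq_0 split: nat.split\<close>)
  then have "poly p x = poly [:coeff p 0, coeff p 1:] x" by simp
  then show ?thesis by (simp add: algebra_simps)
qed

lemma taylor_step:
  fixes A :: "nat \<Rightarrow> real \<Rightarrow> real"
  assumes A: "\<forall>k x. (A (Suc k) has_real_derivative A k x) (at x)"
  shows "\<exists>\<xi>. \<bar>\<xi>\<bar> \<le> \<bar>h\<bar> \<and> A m (b + h) = (\<Sum>j<m. A (m - j) b / fact j * h ^ j) + A 0 (b + \<xi>) / fact m * h ^ m"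
proof -
  have "\<exists>t. \<bar>t\<bar> \<le> \<bar>h\<bar> \<and> (\<lambda>y. A m (b + y)) h = (\<Sum>j<m. (\<lambda>j y. A (m - j) (b + y)) j 0 / fact j * h ^ j)
      + (\<lambda>j y. A (m - j) (b + y)) m t / fact m * h ^ m"
  proof (rule Maclaurin_bi_le)
    show "\<forall>j t. j < m \<and> \<bar>t\<bar> \<le> \<bar>h\<bar> \<longrightarrow>
        ((\<lambda>y. A (m - j) (b + y)) has_real_derivative A (m - Suc j) (b + t)) (at t)"
    proof (intro allI impI)
      fix j t assume "j < m \<and> \<bar>t\<bar> \<le> \<bar>h\<bar>"
      then have e: "m - j = Suc (m - Suc j)" by auto
      have "(A (m - j) has_real_derivative A (m - Suc j) (t + b)) (at (t + b))"
        using A e by metis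
      then have "((\<lambda>y. A (m - j) (y + b)) has_real_derivative A (m - Suc j) (t + b)) (at t)"
        by (simp add: DERIV_shift)
      then show "((\<lambda>y. A (m - j) (b + y)) has_real_derivative A (m - Suc j) (b + t)) (at t)"
        by (simp add: add.commute)
    qed
  qed simp
  then show ?thesis by simp
qed

lemma small_zero:
  fixes X K :: real
  assumes "\<forall>la. la \<noteq> 0 \<longrightarrow> \<bar>X\<bar> \<le> K * \<bar>la\<bar>"
  shows "X = 0"
proof (rule ccontr)
  assume X: "X \<noteq> 0"
  define la where "la = \<bar>X\<bar> / (2 * (\<bar>K\<bar> + 1))"
  have lp: "la > 0" using X by (simp add: la_def)
  have "la \<noteq> 0" using lp by simp
  with assms have "\<bar>X\<bar> \<le> K * \<bar>la\<bar>" by blast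
  then have "\<bar>X\<bar> \<le> K * la" using lp by simp
  also have "\<dots> \<le> \<bar>K\<bar> * la" using lp by (simp add: mult_right_mono)
  also have "\<dots> = \<bar>X\<bar> * (\<bar>K\<bar> / (2 * (\<bar>K\<bar> + 1)))" by (simp add: la_def)
  also have "\<dots> < \<bar>X\<bar> * 1"
    using X by (intro mult_strict_left_mono) (auto simp: divide_less_eq)
  finally show False by simp
qed

lemma norel_poly:
  fixes \<sigma> :: "real \<Rightarrow> real" and t c :: "nat \<Rightarrow> real"
  assumes lip: "\<forall>x y. \<bar>\<sigma> x - \<sigma> y\<bar> \<le> L * \<bar>x - y\<bar>" and L: "L \<ge> 0"
    and inj: "inj_on t {..<n}" and cne: "i0 < n" "c i0 \<noteq> 0"
    and rel: "\<forall>la \<beta>. (\<Sum>i<n. c i * \<sigma> (la * t i + \<beta>)) = 0"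
  shows "\<exists>p. \<forall>x. \<sigma> x = poly p x"
proof -
  define M where "M k = (\<Sum>i<n. c i * t i ^ k)" for k
  have "\<exists>k<n. M k \<noteq> 0"
    using vandermonde_zero[OF inj, of c i0] cne by (auto simp: M_def)
  then obtain k0 where "M k0 \<noteq> 0" by blast
  define m where "m = (LEAST k. M k \<noteq> 0)"
  have Mm: "M m \<noteq> 0" unfolding m_def by (rule LeastI) fact
  have Mj: "\<And>j. j < m \<Longrightarrow> M j = 0" unfolding m_def using not_less_Least by blast
  show ?thesis
  proof (cases "m = 0")
    case True
    have "\<sigma> x = 0" for x
      using rel[rule_format, of 0 x] Mm True by (simp add: M_def sum_distrib_right[symmetric])
    then show ?thesis by (intro exI[of _ 0]) simp
  next
    case False
    have cont: "continuous_on UNIV \<sigma>"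
    proof -
      have "lipschitz_on L UNIV \<sigma>" using lip L by (intro lipschitz_onI) (auto simp: dist_real_def)
      then show ?thesis by (rule lipschitz_on_continuous_on)
    qed
    obtain A where A0: "A 0 = \<sigma>" and A: "\<forall>k x. (A (Suc k) has_real_derivative A k x) (at x)"
      using antider_chain[OF cont] by blast
    have "\<exists>P. (\<forall>b. (\<Sum>i<n. c i * A m (la * t i + b)) = poly P b) \<and> degree P < m" for la
    proof -
      define g where "g j b = (\<Sum>i<n. c i * A (m - j) (la * t i + b))" for j b
      have "\<forall>j<m. \<forall>x. (g j has_real_derivative g (Suc j) x) (at x)"
      proof (intro allI impI)
        fix j x assume j: "j < m"
        then have e: "m - j = Suc (m - Suc j)" by auto
        have di: "((\<lambda>x. c i * A (m - j) (la * t i + x)) has_real_derivative c i * A (m - Suc j) (la * t i + x)) (at x)" for i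
        proof -
          have "(A (m - j) has_real_derivative A (m - Suc j) (x + la * t i)) (at (x + la * t i))"
            using A e by metis
          then have "((\<lambda>x. A (m - j) (x + la * t i)) has_real_derivative A (m - Suc j) (x + la * t i)) (at x)"
            by (simp add: DERIV_shift)
          then show ?thesis by (auto simp: add.commute intro: DERIV_cmult)
        qed
        show "(g j has_real_derivative g (Suc j) x) (at x)"
          unfolding g_def by (rule DERIV_sum) (rule di)
      qed
      moreover have "\<forall>x. g m x = 0" using rel A0 by (simp add: g_def)
      ultimately obtain P where "\<forall>x. g 0 x = poly P x" "degree P < m"
        using chain_poly[of m g] False by auto
      then show ?thesis by (auto simp: g_def)
    qed
    then obtain P where P: "\<And>la b. (\<Sum>i<n. c i * A m (la * t i + b)) = poly (P la) b"
      and dP: "\<And>la. degree (P la) < m" by metis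
    define T where "T b = M m * \<sigma> b / fact m" for b
    define C where "C = L * (\<Sum>i<n. \<bar>c i\<bar> * \<bar>t i\<bar> ^ Suc m) / fact m"
    have Cnn: "C \<ge> 0" using L unfolding C_def by (intro divide_nonneg_pos mult_nonneg_nonneg sum_nonneg) auto
    have bound: "\<bar>poly (P la) b - la ^ m * T b\<bar> \<le> C * \<bar>la\<bar> ^ Suc m" for la b
    proof -
      have "\<forall>i. \<exists>\<xi>. \<bar>\<xi>\<bar> \<le> \<bar>la * t i\<bar> \<and> A m (b + la * t i) =
          (\<Sum>j<m. A (m - j) b / fact j * (la * t i) ^ j) + A 0 (b + \<xi>) / fact m * (la * t i) ^ m"
        using taylor_step[OF A] by blast
      then obtain \<xi> where \<xi>all: "\<forall>i. \<bar>\<xi> i\<bar> \<le> \<bar>la * t i\<bar> \<and> A m (b + la * t i) =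
          (\<Sum>j<m. A (m - j) b / fact j * (la * t i) ^ j) + A 0 (b + \<xi> i) / fact m * (la * t i) ^ m"
        by (rule choice[THEN exE])
      have \<xi>: "\<And>i. \<bar>\<xi> i\<bar> \<le> \<bar>la * t i\<bar>" using \<xi>all by blast
      have tay: "\<And>i. A m (b + la * t i) =
          (\<Sum>j<m. A (m - j) b / fact j * (la * t i) ^ j) + A 0 (b + \<xi> i) / fact m * (la * t i) ^ m"
        using \<xi>all by blast
      have "poly (P la) b = (\<Sum>i<n. c i * ((\<Sum>j<m. A (m - j) b / fact j * (la * t i) ^ j) + \<sigma> (b + \<xi> i) / fact m * (la * t i) ^ m))"
        using P[of la b, symmetric] tay A0 by (simp add: add.commute)
      also have "\<dots> = (\<Sum>j<m. A (m - j) b / fact j * la ^ j * M j) + (\<Sum>i<n. c i * \<sigma> (b + \<xi> i) / fact m * (la * t i) ^ m)"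
        by (simp add: distrib_left sum.distrib sum_distrib_left M_def power_mult_distrib mult_ac sum_divide_distrib)
           (rule sum.swap)
      also have "(\<Sum>j<m. A (m - j) b / fact j * la ^ j * M j) = 0" using Mj by simp
      finally have "poly (P la) b - la ^ m * T b = (\<Sum>i<n. c i * \<sigma> (b + \<xi> i) / fact m * (la * t i) ^ m) - la ^ m * T b"
        by simp
      also have "\<dots> = (\<Sum>i<n. la ^ m / fact m * (c i * t i ^ m * (\<sigma> (b + \<xi> i) - \<sigma> b)))"
      proof -
        have e1: "la ^ m * T b = (\<Sum>i<n. la ^ m * (c i * t i ^ m * \<sigma> b / fact m))"
          by (simp add: T_def M_def sum_distrib_left sum_distrib_right sum_divide_distrib)
        have "(\<Sum>i<n. c i * \<sigma> (b + \<xi> i) / fact m * (la * t i) ^ m) - (\<Sum>i<n. la ^ m * (c i * t i ^ m * \<sigma> b / fact m))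
            = (\<Sum>i<n. c i * \<sigma> (b + \<xi> i) / fact m * (la * t i) ^ m - la ^ m * (c i * t i ^ m * \<sigma> b / fact m))"
          by (rule sum_subtractf[symmetric])
        also have "\<dots> = (\<Sum>i<n. la ^ m / fact m * (c i * t i ^ m * (\<sigma> (b + \<xi> i) - \<sigma> b)))"
          by (rule sum.cong) (simp_all add: algebra_simps power_mult_distrib)
        finally show ?thesis using e1 by simp
      qed
      finally have eq: "poly (P la) b - la ^ m * T b = (\<Sum>i<n. la ^ m / fact m * (c i * t i ^ m * (\<sigma> (b + \<xi> i) - \<sigma> b)))" .
      have "\<bar>poly (P la) b - la ^ m * T b\<bar> \<le> (\<Sum>i<n. \<bar>la ^ m / fact m * (c i * t i ^ m * (\<sigma> (b + \<xi> i) - \<sigma> b))\<bar>)"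
        unfolding eq by (rule sum_abs)
      also have "\<dots> \<le> (\<Sum>i<n. \<bar>la\<bar> ^ m / fact m * (\<bar>c i\<bar> * \<bar>t i\<bar> ^ m * (L * (\<bar>la\<bar> * \<bar>t i\<bar>))))"
      proof (rule sum_mono)
        fix i
        have "\<bar>\<sigma> (b + \<xi> i) - \<sigma> b\<bar> \<le> L * \<bar>\<xi> i\<bar>" using lip[rule_format, of "b + \<xi> i" b] by simp
        also have "\<dots> \<le> L * (\<bar>la\<bar> * \<bar>t i\<bar>)" using \<xi>[of i] L by (simp add: abs_mult mult_left_mono)
        finally have s: "\<bar>\<sigma> (b + \<xi> i) - \<sigma> b\<bar> \<le> L * (\<bar>la\<bar> * \<bar>t i\<bar>)" .
        show "\<bar>la ^ m / fact m * (c i * t i ^ m * (\<sigma> (b + \<xi> i) - \<sigma> b))\<bar>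
           \<le> \<bar>la\<bar> ^ m / fact m * (\<bar>c i\<bar> * \<bar>t i\<bar> ^ m * (L * (\<bar>la\<bar> * \<bar>t i\<bar>)))"
          unfolding abs_mult abs_divide power_abs using s
          by (simp add: mult_left_mono divide_right_mono)
      qed
      also have "\<dots> = C * \<bar>la\<bar> ^ Suc m"
        by (simp add: C_def sum_distrib_left sum_divide_distrib mult_ac)
      finally show ?thesis .
    qed
    define Lg where "Lg r b = poly (LP m r) b" for r b
    have key: "T b = (\<Sum>r<m. T (real r) * Lg r b)" for b
    proof -
      define K where "K = C * (1 + (\<Sum>r<m. \<bar>Lg r b\<bar>))"
      have "\<bar>T b - (\<Sum>r<m. T (real r) * Lg r b)\<bar> \<le> K * \<bar>la\<bar>" if l: "la \<noteq> 0" for la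
      proof -
        have lag: "poly (P la) b = (\<Sum>r<m. poly (P la) (real r) * Lg r b)"
          unfolding Lg_def by (rule lagrange[OF dP])
        have "la ^ m * (T b - (\<Sum>r<m. T (real r) * Lg r b)) =
            (la ^ m * T b - poly (P la) b) + (\<Sum>r<m. (poly (P la) (real r) - la ^ m * T (real r)) * Lg r b)"
          by (subst lag) (simp add: algebra_simps sum_subtractf sum_distrib_left)
        then have "\<bar>la ^ m * (T b - (\<Sum>r<m. T (real r) * Lg r b))\<bar> \<le>
            \<bar>la ^ m * T b - poly (P la) b\<bar> + \<bar>\<Sum>r<m. (poly (P la) (real r) - la ^ m * T (real r)) * Lg r b\<bar>"
          by (simp add: abs_triangle_ineq)
        also have "\<bar>\<Sum>r<m. (poly (P la) (real r) - la ^ m * T (real r)) * Lg r b\<bar> \<le>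
            (\<Sum>r<m. \<bar>poly (P la) (real r) - la ^ m * T (real r)\<bar> * \<bar>Lg r b\<bar>)"
          by (rule order_trans[OF sum_abs]) (simp add: abs_mult)
        also have "\<dots> \<le> (\<Sum>r<m. C * \<bar>la\<bar> ^ Suc m * \<bar>Lg r b\<bar>)"
          by (intro sum_mono mult_right_mono bound) auto
        also have "\<bar>la ^ m * T b - poly (P la) b\<bar> \<le> C * \<bar>la\<bar> ^ Suc m"
          using bound[of la b] by (simp add: abs_minus_commute)
        finally have F: "\<bar>la ^ m * (T b - (\<Sum>r<m. T (real r) * Lg r b))\<bar> \<le>
           C * \<bar>la\<bar> ^ Suc m + (\<Sum>r<m. C * \<bar>la\<bar> ^ Suc m * \<bar>Lg r b\<bar>)"
          by simp
        have G: "C * \<bar>la\<bar> ^ Suc m + (\<Sum>r<m. C * \<bar>la\<bar> ^ Suc m * \<bar>Lg r b\<bar>) = \<bar>la\<bar> ^ m * (K * \<bar>la\<bar>)"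
          by (simp add: K_def sum_distrib_left sum_distrib_right algebra_simps)
        have H: "\<bar>la ^ m * (T b - (\<Sum>r<m. T (real r) * Lg r b))\<bar> = \<bar>la\<bar> ^ m * \<bar>T b - (\<Sum>r<m. T (real r) * Lg r b)\<bar>"
          by (simp only: abs_mult power_abs)
        have "\<bar>la\<bar> ^ m * \<bar>T b - (\<Sum>r<m. T (real r) * Lg r b)\<bar> \<le> \<bar>la\<bar> ^ m * (K * \<bar>la\<bar>)"
          using F G H by linarith
        then show ?thesis using l by simp
      qed
      then have "T b - (\<Sum>r<m. T (real r) * Lg r b) = 0" by (intro small_zero) blast
      then show ?thesis by simp
    qed
    have "\<sigma> x = poly (\<Sum>r<m. smult (\<sigma> (real r)) (LP m r)) x" for x
    proof -
      have "M m * \<sigma> x / fact m = M m * (\<Sum>r<m. \<sigma> (real r) * Lg r x) / fact m"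
        using key[of x] by (simp add: T_def sum_divide_distrib sum_distrib_left mult_ac)
      then have "\<sigma> x = (\<Sum>r<m. \<sigma> (real r) * Lg r x)" using Mm by simp
      then show ?thesis by (simp add: poly_sum Lg_def)
    qed
    then show ?thesis by blast
  qed
qed

inductive_set Vset :: "(real \<Rightarrow> real) \<Rightarrow> (real \<Rightarrow> real) set" for \<sigma> where
  V0: "(\<lambda>s. 0) \<in> Vset \<sigma>"
| Vadd: "h \<in> Vset \<sigma> \<Longrightarrow> (\<lambda>s. h s + c * \<sigma> (la * s + \<beta>)) \<in> Vset \<sigma>"

lemma V_add: assumes "h \<in> Vset \<sigma>" "g \<in> Vset \<sigma>" shows "(\<lambda>s. h s + g s) \<in> Vset \<sigma>"
  using assms(2)
proof (induction g rule: Vset.induct)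
  case V0 then show ?case using assms(1) by simp
next
  case (Vadd g c la \<beta>)
  have "(\<lambda>s. (h s + g s) + c * \<sigma> (la * s + \<beta>)) \<in> Vset \<sigma>" using Vadd assms(1) by (intro Vset.Vadd) auto
  then show ?case by (simp add: add.assoc)
qed

lemma V_scale: "h \<in> Vset \<sigma> \<Longrightarrow> (\<lambda>s. k * h s) \<in> Vset \<sigma>"
proof (induction h rule: Vset.induct)
  case V0 then show ?case by (simp add: Vset.V0)
next
  case (Vadd h c la \<beta>)
  have "(\<lambda>s. k * h s + (k * c) * \<sigma> (la * s + \<beta>)) \<in> Vset \<sigma>" using Vadd by (intro Vset.Vadd) auto
  then show ?case by (simp add: algebra_simps)
qed

lemma V_sigma: "(\<lambda>s. \<sigma> (la * s + \<beta>)) \<in> Vset \<sigma>"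
  using Vset.Vadd[OF Vset.V0, of 1 \<sigma> la \<beta>] by simp

lemma V_sum: "finite I \<Longrightarrow> (\<And>i. i \<in> I \<Longrightarrow> f i \<in> Vset \<sigma>) \<Longrightarrow> (\<lambda>s. \<Sum>i\<in>I. f i s) \<in> Vset \<sigma>"
proof (induction I rule: finite_induct)
  case empty then show ?case by (simp add: Vset.V0)
next
  case (insert x F)
  have "(\<lambda>s. f x s + (\<Sum>i\<in>F. f i s)) \<in> Vset \<sigma>" using insert by (intro V_add) auto
  then show ?case using insert by simp
qed

lemma V_diff: "h \<in> Vset \<sigma> \<Longrightarrow> g \<in> Vset \<sigma> \<Longrightarrow> (\<lambda>s. h s - g s) \<in> Vset \<sigma>"
  using V_add[of h \<sigma> "\<lambda>s. (-1) * g s"] V_scale[of g \<sigma> "-1"] by simp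

lemma delta_interp:
  fixes \<sigma> :: "real \<Rightarrow> real" and t :: "nat \<Rightarrow> real" and n :: nat
  assumes lip: "\<forall>x y. \<bar>\<sigma> x - \<sigma> y\<bar> \<le> L * \<bar>x - y\<bar>" and L: "L \<ge> 0"
    and nonaff: "\<not> (\<exists>a c. \<forall>s. \<sigma> s = a * s + c)"
  shows "inj_on t {..<n} \<Longrightarrow> \<exists>e. (\<forall>i<n. e i \<in> Vset \<sigma>) \<and> (\<forall>i<n. \<forall>j<n. e i (t j) = (if i = j then 1 else 0))"
proof (induction n)
  case 0 then show ?case by simp
next
  case (Suc n)
  have "inj_on t {..<n}" using Suc.prems by (rule inj_on_subset) auto
  with Suc.IH obtain e where eV: "\<forall>i<n. e i \<in> Vset \<sigma>" and ed: "\<forall>i<n. \<forall>j<n. e i (t j) = (if i = j then 1 else 0)"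
    by blast
  show ?case
  proof (cases "\<exists>g\<in>Vset \<sigma>. g (t n) \<noteq> (\<Sum>j<n. g (t j) * e j (t n))")
    case True
    then obtain g where gV: "g \<in> Vset \<sigma>" and gn: "g (t n) \<noteq> (\<Sum>j<n. g (t j) * e j (t n))" by blast
    define r where "r s = g s - (\<Sum>j<n. g (t j) * e j s)" for s
    have rV: "r \<in> Vset \<sigma>" unfolding r_def
      by (intro V_diff gV V_sum) (auto intro: V_scale simp: eV)
    have r0: "r (t k) = 0" if "k < n" for k
    proof -
      have "(\<Sum>j<n. g (t j) * e j (t k)) = (\<Sum>j<n. g (t j) * (if j = k then 1 else 0))"
        by (rule sum.cong) (use ed that in auto)
      also have "\<dots> = g (t k)" using that by (simp add: if_distrib cong: if_cong)
      finally have "(\<Sum>j<n. g (t j) * e j (t k)) = g (t k)" .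
      then show ?thesis by (simp add: r_def)
    qed
    have rn: "r (t n) \<noteq> 0" using gn by (simp add: r_def)
    define e' where "e' i = (if i = n then (\<lambda>s. r s / r (t n)) else (\<lambda>s. e i s - e i (t n) * (r s / r (t n))))" for i
    show ?thesis
    proof (intro exI[of _ e'] conjI allI impI)
      fix i assume "i < Suc n"
      then show "e' i \<in> Vset \<sigma>"
        using rV eV by (auto simp: e'_def divide_inverse mult.commute[of _ "inverse _"] intro!: V_scale V_diff
            simp del: mult.commute)
    next
      fix i j assume ij: "i < Suc n" "j < Suc n"
      show "e' i (t j) = (if i = j then 1 else 0)"
        using ij ed r0 rn by (auto simp: e'_def less_Suc_eq)
    qed
  next
    case False
    define c where "c i = (if i = n then -1 else e i (t n))" for i
    have rel: "\<forall>la \<beta>. (\<Sum>i<Suc n. c i * \<sigma> (la * t i + \<beta>)) = 0"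
    proof (intro allI)
      fix la \<beta>
      have "(\<lambda>s. \<sigma> (la * s + \<beta>)) (t n) = (\<Sum>j<n. (\<lambda>s. \<sigma> (la * s + \<beta>)) (t j) * e j (t n))"
      proof -
        have "\<forall>g\<in>Vset \<sigma>. g (t n) = (\<Sum>j<n. g (t j) * e j (t n))" using False by blast
        from bspec[OF this V_sigma[of \<sigma> la \<beta>]] show ?thesis .
      qed
      then show "(\<Sum>i<Suc n. c i * \<sigma> (la * t i + \<beta>)) = 0"
        by (simp add: c_def mult.commute)
    qed
    obtain p where p: "\<forall>x. \<sigma> x = poly p x"
      using norel_poly[OF lip L Suc.prems, of n c] rel by (auto simp: c_def)
    have "\<forall>x y. \<bar>poly p x - poly p y\<bar> \<le> L * \<bar>x - y\<bar>" using lip p by metis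
    then have "degree p \<le> 1" by (rule lip_poly_deg)
    then have "\<forall>s. \<sigma> s = coeff p 1 * s + coeff p 0" using p deg1_affine by metis
    with nonaff show ?thesis by blast
  qed
qed

lemma interp_finite:
  fixes \<sigma> :: "real \<Rightarrow> real"
  assumes lip: "\<forall>x y. \<bar>\<sigma> x - \<sigma> y\<bar> \<le> L * \<bar>x - y\<bar>" and L: "L \<ge> 0"
    and nonaff: "\<not> (\<exists>a c. \<forall>s. \<sigma> s = a * s + c)"
    and T: "finite T"
  shows "\<exists>h\<in>Vset \<sigma>. \<forall>x\<in>T. h x = v x"
proof -
  obtain t where bt: "bij_betw t {0..<card T} T" using ex_bij_betw_nat_finite[OF T] by blast
  then have inj: "inj_on t {..<card T}" by (simp add: bij_betw_def atLeast0LessThan)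
  obtain e where eV: "\<forall>i<card T. e i \<in> Vset \<sigma>" and ed: "\<forall>i<card T. \<forall>j<card T. e i (t j) = (if i = j then 1 else 0)"
    using delta_interp[OF lip L nonaff inj] by blast
  define h where "h s = (\<Sum>i<card T. v (t i) * e i s)" for s
  have "h \<in> Vset \<sigma>" unfolding h_def by (intro V_sum V_scale) (auto simp: eV)
  moreover have "h x = v x" if "x \<in> T" for x
  proof -
    obtain j where j: "j < card T" "x = t j" using bt \<open>x \<in> T\<close> by (auto simp: bij_betw_def atLeast0LessThan)
    have "h x = (\<Sum>i<card T. v (t i) * (if i = j then 1 else 0))" using ed j by (simp add: h_def)
    also have "\<dots> = v x" using j by (simp add: if_distrib cong: if_cong)
    finally show ?thesis .
  qed
  ultimately show ?thesis by blast
qed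

lemma axis_nth_other: "j \<noteq> l \<Longrightarrow> axis l c $ j = (0::real)"
  by (simp add: axis_def)

lemma flow_axis_field:
  fixes a :: "real^'d" and \<phi> :: "real \<Rightarrow> real"
  assumes al: "a $ l = 0"
  shows "flow (\<lambda>x. axis l (\<phi> (a \<bullet> x))) 1 x = x + axis l (\<phi> (a \<bullet> x))"
proof -
  define g where "g = (\<lambda>x::real^'d. axis l (\<phi> (a \<bullet> x)))"
  define v where "v = axis l (\<phi> (a \<bullet> x))"
  have av: "a \<bullet> (y + r *\<^sub>R v) = a \<bullet> y" for y r
    by (simp add: v_def inner_add_right inner_axis al)
  have ex: "\<exists>u. u 0 = x \<and> u 1 = x + v \<and> (\<forall>s\<in>{0..1}. (u has_vector_derivative g (u s)) (at s within {0..1}))"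
  proof (intro exI[of _ "\<lambda>s. x + s *\<^sub>R v"] conjI ballI)
    fix s :: real
    have "((\<lambda>s. x + s *\<^sub>R v) has_vector_derivative v) (at s within {0..1})"
      by (auto intro!: derivative_eq_intros simp: has_vector_derivative_def)
    moreover have "g (x + s *\<^sub>R v) = v" using av by (simp add: g_def v_def)
    ultimately show "((\<lambda>s. x + s *\<^sub>R v) has_vector_derivative g (x + s *\<^sub>R v)) (at s within {0..1})" by simp
  qed auto
  have uniq: "y = x + v" if H: "\<exists>u. u 0 = x \<and> u 1 = y \<and> (\<forall>s\<in>{0..1}. (u has_vector_derivative g (u s)) (at s within {0..1}))" for y
  proof -
    obtain u where u0: "u 0 = x" and u1: "u 1 = y" and ud: "\<forall>s\<in>{0..1}. (u has_vector_derivative g (u s)) (at s within {0..1})"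
      using H by blast
    have I: "((\<lambda>r. g (u r)) has_integral (u s - x)) {0..s}" if s: "s \<in> {0..1}" for s
    proof -
      have "((\<lambda>r. g (u r)) has_integral (u s - u 0)) {0..s}"
      proof (rule fundamental_theorem_of_calculus)
        show "0 \<le> s" using s by simp
        fix r assume r: "r \<in> {0..s}"
        then have "r \<in> {0..1}" using s by auto
        then have "(u has_vector_derivative g (u r)) (at r within {0..1})" using ud by blast
        then show "(u has_vector_derivative g (u r)) (at r within {0..s})"
          by (rule has_vector_derivative_within_subset) (use s in auto)
      qed
      then show ?thesis using u0 by simp
    qed
    have other: "u s $ j = x $ j" if s: "s \<in> {0..1}" and j: "j \<noteq> l" for s j
    proof -
      have "(((\<lambda>w. w $ j) \<circ> (\<lambda>r. g (u r))) has_integral ((u s - x) $ j)) {0..s}"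
        by (rule has_integral_linear[OF I[OF s] bounded_linear_vec_nth])
      moreover have "((\<lambda>w. w $ j) \<circ> (\<lambda>r. g (u r))) = (\<lambda>r. 0)"
        using j by (simp add: g_def o_def axis_nth_other)
      ultimately have "((\<lambda>r. 0::real) has_integral ((u s - x) $ j)) {0..s}" by simp
      then have "(u s - x) $ j = 0" using has_integral_0 has_integral_unique by blast
      then show ?thesis by simp
    qed
    have au: "a \<bullet> u s = a \<bullet> x" if s: "s \<in> {0..1}" for s
      unfolding inner_vec_def
    proof (rule sum.cong)
      fix j show "a $ j \<bullet> u s $ j = a $ j \<bullet> x $ j"
        by (cases "j = l") (use al other[OF s] in auto)
    qed simp
    have F: "(((\<lambda>w. w $ l) \<circ> (\<lambda>r. g (u r))) has_integral ((u 1 - x) $ l)) {0..1}"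
      by (rule has_integral_linear[OF I bounded_linear_vec_nth]) simp
    have E: "\<And>r. r \<in> {0..1} \<Longrightarrow> ((\<lambda>w. w $ l) \<circ> (\<lambda>r. g (u r))) r = \<phi> (a \<bullet> x)"
      by (simp add: g_def au)
    have "((\<lambda>r. \<phi> (a \<bullet> x)) has_integral ((u 1 - x) $ l)) {0..1::real}"
      by (rule has_integral_eq[OF E F])
    moreover have "((\<lambda>r. \<phi> (a \<bullet> x)) has_integral \<phi> (a \<bullet> x)) {0..1::real}"
      using has_integral_const_real[of "\<phi> (a \<bullet> x)" 0 1] by simp
    ultimately have ul: "(u 1 - x) $ l = \<phi> (a \<bullet> x)" using has_integral_unique by blast
    show "y = x + v"
    proof (subst vec_eq_iff, intro allI)
      fix j show "y $ j = (x + v) $ j"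
        using u1 ul other[of 1 j] by (cases "j = l") (auto simp: v_def axis_nth_other)
    qed
  qed
  have "flow g 1 x = x + v"
    unfolding flow_def
  proof (rule the_equality)
    show "\<exists>u. u 0 = x \<and> u 1 = x + v \<and> (\<forall>s\<in>{0..1}. (u has_vector_derivative g (u s)) (at s within {0..1}))"
      by (rule ex)
  qed (rule uniq)
  then show ?thesis by (simp add: g_def v_def)
qed

lemma FC_comp:
  assumes "\<psi> \<in> flow_compositions F" "\<phi> \<in> flow_compositions F"
  shows "\<psi> \<circ> \<phi> \<in> flow_compositions F"
  using assms(1)
proof (induction \<psi> rule: flow_compositions.induct)
  case id_in then show ?case using assms(2) by simp
next
  case (comp_in \<psi> f t)
  have "flow f t \<circ> (\<psi> \<circ> \<phi>) \<in> flow_compositions F" using comp_in by (intro flow_compositions.comp_in)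
  then show ?case by (simp only: comp_assoc)
qed

lemma flow_in_FC: "f \<in> F \<Longrightarrow> t \<ge> 0 \<Longrightarrow> flow f t \<in> flow_compositions F"
  using flow_compositions.comp_in[OF flow_compositions.id_in, of f F t] by simp

lemma shear_field_in:
  fixes \<sigma> :: "real \<Rightarrow> real" and \<A> :: "(real^'d^'d) set"
  assumes rows: "\<forall>l. {A $ l | A. A \<in> \<A>} = UNIV"
  shows "(\<lambda>x. axis l (k * \<sigma> (a \<bullet> x + b))) \<in> control_family \<sigma> \<A>"
proof -
  have "a \<in> {A $ l | A. A \<in> \<A>}" using rows by blast
  then obtain A where A: "A \<in> \<A>" "A $ l = a" by blast
  define W :: "real^'d^'d" where "W = (\<chi> i j. if i = l \<and> j = l then k else 0)"
  define bv :: "real^'d" where "bv = (\<chi> i. b)"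
  have diag: "is_diagonal W" by (simp add: is_diagonal_def W_def)
  have eq: "(\<lambda>x. axis l (k * \<sigma> (a \<bullet> x + b))) = (\<lambda>x. W *v elementwise \<sigma> (A *v x + bv))"
  proof (rule ext, subst vec_eq_iff, intro allI)
    fix x :: "real^'d" and j
    have "(W *v elementwise \<sigma> (A *v x + bv)) $ j = (\<Sum>i\<in>UNIV. W $ j $ i * elementwise \<sigma> (A *v x + bv) $ i)"
      by (simp add: matrix_vector_mult_def)
    also have "\<dots> = (\<Sum>i\<in>UNIV. if i = l then (if j = l then k * elementwise \<sigma> (A *v x + bv) $ l else 0) else 0)"
      by (rule sum.cong) (auto simp: W_def)
    also have "\<dots> = (if j = l then k * elementwise \<sigma> (A *v x + bv) $ l else 0)"
      by simp
    also have "\<dots> = axis l (k * \<sigma> (a \<bullet> x + b)) $ j"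
      by (auto simp: elementwise_def bv_def matrix_vector_mul_component A axis_def)
    finally show "axis l (k * \<sigma> (a \<bullet> x + b)) $ j = (W *v elementwise \<sigma> (A *v x + bv)) $ j" by simp
  qed
  show ?thesis unfolding control_family_def eq using diag A by blast
qed

lemma axis_add_real: "axis l (p + q) = axis l p + axis l (q::real)"
  by (simp add: vec_eq_iff axis_def)

lemma gshear_in:
  fixes \<sigma> :: "real \<Rightarrow> real" and \<A> :: "(real^'d^'d) set" and a :: "real^'d"
  assumes rows: "\<forall>l. {A $ l | A. A \<in> \<A>} = UNIV" and al: "a $ l = 0"
    and hV: "h \<in> Vset \<sigma>"
  shows "(\<lambda>x. x + axis l (h (a \<bullet> x))) \<in> flow_compositions (control_family \<sigma> \<A>)"
  using hV
proof (induction h rule: Vset.induct)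
  case V0
  have "(\<lambda>x::real^'d. x + axis l 0) = id" by (simp add: fun_eq_iff vec_eq_iff axis_def)
  then show ?case by (simp add: flow_compositions.id_in)
next
  case (Vadd h c la \<beta>)
  define a' where "a' = la *\<^sub>R a"
  have a'l: "a' $ l = 0" using al by (simp add: a'_def)
  have "flow (\<lambda>x. axis l (c * \<sigma> (a' \<bullet> x + \<beta>))) 1 \<in> flow_compositions (control_family \<sigma> \<A>)"
    by (rule flow_in_FC[OF shear_field_in[OF rows]]) simp
  moreover have "flow (\<lambda>x. axis l (c * \<sigma> (a' \<bullet> x + \<beta>))) 1 = (\<lambda>x. x + axis l (c * \<sigma> (a' \<bullet> x + \<beta>)))"
    using flow_axis_field[OF a'l, of "\<lambda>s. c * \<sigma> (s + \<beta>)"] by (simp add: fun_eq_iff)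
  ultimately have S: "(\<lambda>x. x + axis l (c * \<sigma> (a' \<bullet> x + \<beta>))) \<in> flow_compositions (control_family \<sigma> \<A>)"
    by simp
  have "(\<lambda>x. x + axis l (c * \<sigma> (a' \<bullet> x + \<beta>))) \<circ> (\<lambda>x. x + axis l (h (a \<bullet> x))) =
        (\<lambda>x. x + axis l (h (a \<bullet> x) + c * \<sigma> (la * (a \<bullet> x) + \<beta>)))"
    by (simp add: fun_eq_iff a'_def inner_add_right inner_axis al axis_add_real algebra_simps)
  then show ?case using FC_comp[OF S Vadd.IH] by simp
qed

definition reach :: "(real^'d \<Rightarrow> real^'d) set \<Rightarrow> nat \<Rightarrow> (nat \<Rightarrow> real^'d) \<Rightarrow> (nat \<Rightarrow> real^'d) \<Rightarrow> bool" where
  "reach F N x y \<longleftrightarrow> (\<exists>\<phi>\<in>flow_compositions F. \<forall>i<N. \<phi> (x i) = y i)"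

lemma reach_trans: "reach F N x y \<Longrightarrow> reach F N y z \<Longrightarrow> reach F N x z"
  unfolding reach_def
proof -
  assume "\<exists>\<phi>\<in>flow_compositions F. \<forall>i<N. \<phi> (x i) = y i" "\<exists>\<phi>\<in>flow_compositions F. \<forall>i<N. \<phi> (y i) = z i"
  then obtain \<phi> \<psi> where "\<phi> \<in> flow_compositions F" "\<forall>i<N. \<phi> (x i) = y i" "\<psi> \<in> flow_compositions F" "\<forall>i<N. \<psi> (y i) = z i"
    by blast
  then show "\<exists>\<phi>\<in>flow_compositions F. \<forall>i<N. \<phi> (x i) = z i"
    by (intro bexI[of _ "\<psi> \<circ> \<phi>"] FC_comp) auto
qed

definition both where "both F N x y \<longleftrightarrow> reach F N x y \<and> reach F N y x"

lemma both_trans: "both F N x y \<Longrightarrow> both F N y z \<Longrightarrow> both F N x z"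
  unfolding both_def using reach_trans by blast

lemma both_sym: "both F N x y \<Longrightarrow> both F N y x"
  unfolding both_def by blast

lemma reach_step:
  fixes \<sigma> :: "real \<Rightarrow> real" and \<A> :: "(real^'d^'d) set" and a :: "real^'d"
  assumes rows: "\<forall>l. {A $ l | A. A \<in> \<A>} = UNIV" and al: "a $ l = 0"
    and lip: "\<forall>x y. \<bar>\<sigma> x - \<sigma> y\<bar> \<le> L * \<bar>x - y\<bar>" and L: "L \<ge> 0"
    and nonaff: "\<not> (\<exists>a c. \<forall>s. \<sigma> s = a * s + c)"
  shows "reach (control_family \<sigma> \<A>) N x (\<lambda>i. x i + axis l (D (a \<bullet> x i)))"
proof -
  obtain h where hV: "h \<in> Vset \<sigma>" and hD: "\<forall>s\<in>(\<lambda>i. a \<bullet> x i) ` {..<N}. h s = D s"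
    using interp_finite[OF lip L nonaff, of "(\<lambda>i. a \<bullet> x i) ` {..<N}" D] by blast
  show ?thesis unfolding reach_def
    using gshear_in[OF rows al hV] hD by (intro bexI[of _ "\<lambda>x. x + axis l (h (a \<bullet> x))"]) auto
qed

lemma both_step:
  fixes \<sigma> :: "real \<Rightarrow> real" and \<A> :: "(real^'d^'d) set" and a :: "real^'d"
  assumes rows: "\<forall>l. {A $ l | A. A \<in> \<A>} = UNIV" and al: "a $ l = 0"
    and lip: "\<forall>x y. \<bar>\<sigma> x - \<sigma> y\<bar> \<le> L * \<bar>x - y\<bar>" and L: "L \<ge> 0"
    and nonaff: "\<not> (\<exists>a c. \<forall>s. \<sigma> s = a * s + c)"
  shows "both (control_family \<sigma> \<A>) N x (\<lambda>i. x i + axis l (D (a \<bullet> x i)))"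
proof -
  define y where "y = (\<lambda>i. x i + axis l (D (a \<bullet> x i)))"
  have ay: "a \<bullet> y i = a \<bullet> x i" for i by (simp add: y_def inner_add_right inner_axis al)
  have r1: "reach (control_family \<sigma> \<A>) N x y" unfolding y_def by (rule reach_step[OF rows al lip L nonaff])
  have "reach (control_family \<sigma> \<A>) N y (\<lambda>i. y i + axis l ((\<lambda>s. - D s) (a \<bullet> y i)))"
    by (rule reach_step[OF rows al lip L nonaff])
  moreover have "(\<lambda>i. y i + axis l ((\<lambda>s. - D s) (a \<bullet> y i))) = x"
    by (simp add: fun_eq_iff ay) (simp add: y_def vec_eq_iff axis_def)
  ultimately have r2: "reach (control_family \<sigma> \<A>) N y x" by simp
  show ?thesis using r1 r2 by (simp add: both_def y_def)
qed

lemma generic_vec: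
  fixes Vs :: "(real^'d) set" and q :: 'd
  assumes fin: "finite Vs" and nz: "\<forall>v\<in>Vs. \<exists>k. k \<noteq> q \<and> v $ k \<noteq> 0"
  shows "\<exists>a. a $ q = 0 \<and> (\<forall>v\<in>Vs. a \<bullet> v \<noteq> 0)"
proof -
  obtain enc :: "'d \<Rightarrow> nat" and n where "enc ` UNIV = {i. i < n}" "inj_on enc UNIV"
    using finite_imp_inj_to_nat_seg[of "UNIV :: 'd set"] by auto
  then have inj: "inj enc" by simp
  define P where "P v = (\<Sum>k\<in>UNIV. monom (if k = q then 0 else v $ k) (enc k))" for v :: "real^'d"
  define a where "a \<mu> = (\<chi> k. if k = q then 0 else \<mu> ^ enc k)" for \<mu> :: real
  have aP: "a \<mu> \<bullet> v = poly (P v) \<mu>" for \<mu> v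
    unfolding inner_vec_def P_def a_def poly_sum
    by (rule sum.cong) (auto simp: poly_monom)
  have Pnz: "P v \<noteq> 0" if vV: "v \<in> Vs" for v
  proof -
    obtain k0 where k0: "k0 \<noteq> q" "v $ k0 \<noteq> 0" using nz vV by blast
    have "coeff (P v) (enc k0) = (\<Sum>k\<in>UNIV. if enc k = enc k0 then (if k = q then 0 else v $ k) else 0)"
      by (simp only: P_def coeff_sum coeff_monom)
    also have "\<dots> = (\<Sum>k\<in>UNIV. if k = k0 then (if k = q then 0 else v $ k) else 0)"
      by (simp only: inj_eq[OF inj])
    also have "\<dots> = (if k0 = q then 0 else v $ k0)" by (simp add: sum.delta)
    also have "\<dots> = v $ k0" using k0 by simp
    finally have "coeff (P v) (enc k0) \<noteq> 0" using k0 by simp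
    then show ?thesis by (metis coeff_0)
  qed
  define R where "R = (\<Union>v\<in>Vs. {\<mu>. poly (P v) \<mu> = 0})"
  have "finite R" unfolding R_def using fin Pnz by (intro finite_UN_I) (auto intro: poly_roots_finite)
  then obtain \<mu> where "\<mu> \<notin> R" using ex_new_if_finite[OF infinite_UNIV_char_0] by blast
  then have "\<forall>v\<in>Vs. a \<mu> \<bullet> v \<noteq> 0" by (auto simp: R_def aP)
  moreover have "a \<mu> $ q = 0" by (simp add: a_def)
  ultimately show ?thesis by blast
qed

lemma reach_refl: "reach F N x x"
  unfolding reach_def by (intro bexI[of _ id] flow_compositions.id_in) auto

lemma reach_cong: "reach F N x y \<Longrightarrow> (\<And>i. i < N \<Longrightarrow> y i = y' i) \<Longrightarrow> reach F N x y'"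
  unfolding reach_def by auto

lemma reach_cong_left: "reach F N x y \<Longrightarrow> (\<And>i. i < N \<Longrightarrow> x i = x' i) \<Longrightarrow> reach F N x' y"
  unfolding reach_def by auto

lemma both_cong: "both F N x y \<Longrightarrow> (\<And>i. i < N \<Longrightarrow> y i = y' i) \<Longrightarrow> both F N x y'"
  unfolding both_def using reach_cong reach_cong_left by metis

lemma both_refl: "both F N x x"
  unfolding both_def using reach_refl by blast

lemma inner_axis1: "axis q (1::real) \<bullet> y = y $ q"
  by (simp add: inner_axis')

lemma std_config:
  fixes \<sigma> :: "real \<Rightarrow> real" and \<A> :: "(real^'d^'d) set" and x :: "nat \<Rightarrow> real^'d"
  assumes rows: "\<forall>l. {A $ l | A. A \<in> \<A>} = UNIV"
    and lip: "\<forall>x y. \<bar>\<sigma> x - \<sigma> y\<bar> \<le> L * \<bar>x - y\<bar>" and L: "L \<ge> 0"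
    and nonaff: "\<not> (\<exists>a c. \<forall>s. \<sigma> s = a * s + c)"
    and pq: "p \<noteq> q" and inj: "inj_on x {..<N}"
  shows "both (control_family \<sigma> \<A>) N x (\<lambda>i. axis p (real i))"
proof -
  let ?F = "control_family \<sigma> \<A>"
  have step: "\<And>a l D y. a $ l = 0 \<Longrightarrow> both ?F N y (\<lambda>i. y i + axis l (D (a \<bullet> y i)))"
    using both_step[OF rows _ lip L nonaff] by blast
  \<comment> \<open>Step 1: make the q-coordinates distinct\<close>
  define Vs where "Vs = {x i - x j | i j. i < N \<and> j < N \<and> (\<exists>k. k \<noteq> q \<and> x i $ k \<noteq> x j $ k)}"
  have "Vs \<subseteq> (\<lambda>(i, j). x i - x j) ` ({..<N} \<times> {..<N})" unfolding Vs_def by auto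
  then have finV: "finite Vs" by (rule finite_subset) auto
  have nzV: "\<forall>v\<in>Vs. \<exists>k. k \<noteq> q \<and> v $ k \<noteq> 0" unfolding Vs_def by auto
  obtain a where aq: "a $ q = 0" and aV: "\<forall>v\<in>Vs. a \<bullet> v \<noteq> 0"
    using generic_vec[OF finV nzV] by blast
  have agree: "x i $ k = x j $ k" if "i < N" "j < N" "a \<bullet> x i = a \<bullet> x j" "k \<noteq> q" for i j k
  proof (rule ccontr)
    assume "x i $ k \<noteq> x j $ k"
    then have "x i - x j \<in> Vs" unfolding Vs_def using that by blast
    then have "a \<bullet> (x i - x j) \<noteq> 0" using aV by blast
    then show False using that by (simp add: inner_diff_right)
  qed
  define B where "B = (\<lambda>(i, j). (x j $ q - x i $ q) / (a \<bullet> x i - a \<bullet> x j)) ` ({..<N} \<times> {..<N})"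
  have "finite B" unfolding B_def by auto
  then obtain M where MB: "M \<notin> B" using ex_new_if_finite[OF infinite_UNIV_char_0] by blast
  define x1 where "x1 = (\<lambda>i. x i + axis q ((\<lambda>s. M * s) (a \<bullet> x i)))"
  have b1: "both ?F N x x1" unfolding x1_def by (rule step[OF aq])
  define c1 where "c1 i = x1 i $ q" for i
  have c1: "c1 i = x i $ q + M * (a \<bullet> x i)" for i by (simp add: c1_def x1_def)
  have injc1: "inj_on c1 {..<N}"
  proof (rule inj_onI)
    fix i j assume i: "i \<in> {..<N}" and j: "j \<in> {..<N}" and eq: "c1 i = c1 j"
    show "i = j"
    proof (rule ccontr)
      assume ij: "i \<noteq> j"
      then have xne: "x i \<noteq> x j" using inj i j by (auto simp: inj_on_def)
      show False
      proof (cases "a \<bullet> x i = a \<bullet> x j")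
        case True
        have "x i $ k = x j $ k" for k
        proof (cases "k = q")
          case True
          then show ?thesis using eq c1[of i] c1[of j] \<open>a \<bullet> x i = a \<bullet> x j\<close> by simp
        next
          case False
          then show ?thesis using agree[of i j k] i j True by simp
        qed
        then show False using xne by (simp add: vec_eq_iff)
      next
        case False
        have "M * (a \<bullet> x i - a \<bullet> x j) = x j $ q - x i $ q" using eq c1[of i] c1[of j] by (simp add: algebra_simps)
        then have "M = (x j $ q - x i $ q) / (a \<bullet> x i - a \<bullet> x j)" using False by (simp add: field_simps)
        then have "M \<in> B" unfolding B_def using i j by force
        then show False using MB by simp
      qed
    qed
  qed
  define g where "g s = the_inv_into {..<N} c1 s" for s
  define D where "D s = real (g s) - x1 (g s) $ p" for s
  define x2 where "x2 = (\<lambda>i. x1 i + axis p (D (axis q 1 \<bullet> x1 i)))"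
  have aqp: "axis q (1::real) $ p = 0" using pq by (simp add: axis_def)
  have b2: "both ?F N x1 x2" unfolding x2_def by (rule step[OF aqp])
  have x2p: "x2 i $ p = real i" if "i < N" for i
  proof -
    have "g (c1 i) = i" unfolding g_def using injc1 that by (simp add: the_inv_into_f_f)
    then show ?thesis by (simp add: x2_def inner_axis1 D_def c1_def[symmetric])
  qed
  have b3: "finite K \<Longrightarrow> p \<notin> K \<Longrightarrow> both ?F N x2 (\<lambda>i. \<chi> k. if k \<in> K then 0 else x2 i $ k)" for K
  proof (induction K rule: finite_induct)
    case empty
    have "both ?F N x2 x2" by (rule both_refl)
    then show ?case by (rule both_cong) (simp add: vec_eq_iff)
  next
    case (insert k K)
    define w where "w = (\<lambda>i. \<chi> j. if j \<in> K then 0 else x2 i $ j)"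
    have kp: "k \<noteq> p" using insert by auto
    have apk: "axis p (1::real) $ k = 0" using kp by (simp add: axis_def)
    have "both ?F N x2 w" unfolding w_def using insert by simp
    moreover have "both ?F N w (\<lambda>i. w i + axis k ((\<lambda>s. - (w (nat \<lfloor>s\<rfloor>) $ k)) (axis p 1 \<bullet> w i)))"
      by (rule step[OF apk])
    ultimately have bb: "both ?F N x2 (\<lambda>i. w i + axis k ((\<lambda>s. - (w (nat \<lfloor>s\<rfloor>) $ k)) (axis p 1 \<bullet> w i)))"
      by (rule both_trans)
    show ?case
    proof (rule both_cong[OF bb])
      fix i assume i: "i < N"
      have "axis p 1 \<bullet> w i = real i" using insert.prems x2p[OF i] by (simp add: inner_axis1 w_def)
      then show "w i + axis k ((\<lambda>s. - (w (nat \<lfloor>s\<rfloor>) $ k)) (axis p 1 \<bullet> w i)) = (\<chi> j. if j \<in> insert k K then 0 else x2 i $ j)"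
        by (simp add: vec_eq_iff axis_def w_def)
    qed
  qed
  have "both ?F N x2 (\<lambda>i. \<chi> k. if k \<in> UNIV - {p} then 0 else x2 i $ k)" by (rule b3) auto
  then have b3': "both ?F N x2 (\<lambda>i. axis p (real i))"
    by (rule both_cong) (simp add: vec_eq_iff axis_def x2p)
  show ?thesis using both_trans[OF both_trans[OF b1 b2] b3'] .
qed

theorem corollary3p6:
  fixes \<sigma> :: "real \<Rightarrow> real" and \<A> :: "(real^'d^'d) set"
  assumes "CARD('d) \<ge> 2"
    and "\<exists>L. lipschitz_on L UNIV \<sigma>"
    and "\<not> (\<exists>a c. \<forall>s. \<sigma> s = a * s + c)"
    and "\<forall>l. {A $ l | A. A \<in> \<A>} = UNIV"
  shows "universal_interpolation (control_family \<sigma> \<A>)"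
proof -
  note rows = assms(4) and nonaff = assms(3)
  obtain L where lipo: "lipschitz_on L UNIV \<sigma>" using assms(2) by blast
  have L: "L \<ge> 0" using lipo by (simp add: lipschitz_on_def)
  have lip: "\<forall>x y. \<bar>\<sigma> x - \<sigma> y\<bar> \<le> L * \<bar>x - y\<bar>"
    using lipo by (auto simp: lipschitz_on_def dist_real_def)
  obtain p :: 'd where True by blast
  have "\<exists>q. q \<noteq> p"
  proof (rule ccontr)
    assume "\<not> (\<exists>q. q \<noteq> p)"
    then have "(UNIV :: 'd set) = {p}" by auto
    then have "card (UNIV :: 'd set) = card {p}" by (rule arg_cong)
    then show False using assms(1) by simp
  qed
  then obtain q :: 'd where pq: "p \<noteq> q" by metis
  show ?thesis unfolding universal_interpolation_def
  proof (intro allI impI)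
    fix \<epsilon> :: real and N :: nat and x y :: "nat \<Rightarrow> real^'d"
    assume e: "\<epsilon> > 0" and dist: "\<forall>i<N. \<forall>j<N. i \<noteq> j \<longrightarrow> x i \<noteq> x j \<and> y i \<noteq> y j"
    have injx: "inj_on x {..<N}" using dist by (auto simp: inj_on_def)
    have injy: "inj_on y {..<N}" using dist by (auto simp: inj_on_def)
    have bx: "both (control_family \<sigma> \<A>) N x (\<lambda>i. axis p (real i))"
      by (rule std_config[OF rows lip L nonaff pq injx])
    have by': "both (control_family \<sigma> \<A>) N y (\<lambda>i. axis p (real i))"
      by (rule std_config[OF rows lip L nonaff pq injy])
    have "reach (control_family \<sigma> \<A>) N x y"
      using bx by' reach_trans unfolding both_def by blast
    then obtain \<phi> where \<phi>: "\<phi> \<in> flow_compositions (control_family \<sigma> \<A>)" "\<forall>i<N. \<phi> (x i) = y i"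
      unfolding reach_def by blast
    show "\<exists>\<phi>\<in>flow_compositions (control_family \<sigma> \<A>). \<forall>i<N. \<forall>l. \<bar>\<phi> (x i) $ l - y i $ l\<bar> \<le> \<epsilon>"
      using \<phi> e by (intro bexI[of _ \<phi>]) auto
  qed
qed

end
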